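(* Let $K^{\mathsf{m}},K^{\mathsf{v}}$ be positive-definite kernels on $\mathcal{X}$ with RKHSs $\mathcal{H}^{\mathsf{m}},\mathcal{H}^{\mathsf{v}}$ and feature maps $\phi^{\mathsf{m}}_x=K^{\mathsf{m}}(x,\cdot)$, $\phi^{\mathsf{v}}_x=K^{\mathsf{v}}(x,\cdot)$. Let $(x_i,y_i)\in\mathcal{X}\times\mathbb{R}$, $i=1,\dots,n$, let $\mathbf{K}^{\mathsf{m}},\mathbf{K}^{\mathsf{v}}\in\mathbb{S}^{n\times n}$ be the kernel matrices $\mathbf{K}^{\mathsf{m}}_{ij}=K^{\mathsf{m}}(x_i,x_j)$, $\mathbf{K}^{\mathsf{v}}_{ij}=K^{\mathsf{v}}(x_i,x_j)$, with $i$-th columns $\mathsf{K}^{\mathsf{m}}_i,\mathsf{K}^{\mathsf{v}}_i$, and let $\gamma\ge0$. Consider the finite-dimensional program $$(\mathrm{P}_n)\quad\min_{\alpha\in\mathbb{R}^n,\ \mathbf{B}\in\mathbb{S}^{n\times n}}\ \gamma\langle\alpha,\mathbf{K}^{\mathsf{m}}\alpha\rangle+\operatorname{Tr}(\mathbf{K}^{\mathsf{v}}\mathbf{B})\quad\text{s.t.}\quad\langle\mathsf{K}^{\mathsf{v}}_i,\mathbf{B}\mathsf{K}^{\mathsf{v}}_i\rangle\ge\big(y_i-\langle\mathsf{K}^{\mathsf{m}}_i,\alpha\rangle\big)^2\ \forall i,\ \ \mathbf{B}\succeq0,$$ and the infinite-dimensional program $$(\mathrm{P}_\infty)\quad\min_{\beta\in\mathcal{H}^{\mathsf{m}},\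 \mathbf{A}:\mathcal{H}^{\mathsf{v}}\to\mathcal{H}^{\mathsf{v}}}\ \gamma\|\beta\|^2_{\mathcal{H}^{\mathsf{m}}}+\|\mathbf{A}\|_\star\quad\text{s.t.}\quad\langle\phi^{\mathsf{v}}_{x_i},\mathbf{A}\phi^{\mathsf{v}}_{x_i}\rangle_{\mathcal{H}^{\mathsf{v}}}\ge\big(y_i-\langle\phi^{\mathsf{m}}_{x_i},\beta\rangle_{\mathcal{H}^{\mathsf{m}}}\big)^2\ \forall i,\ \ \mathbf{A}\succeq0.$$ Then the two programs are equivalent: they have the same optimal value, the map $(\alpha,\mathbf{B})\mapsto(\beta,\mathbf{A})$ with $\beta=\sum_i\alpha_i\phi^{\mathsf{m}}_{x_i}$ and $\mathbf{A}=\sum_{i,j}\mathbf{B}_{ij}\,\phi^{\mathsf{v}}_{x_i}\otimes\phi^{\mathsf{v}}_{x_j}$ sends feasible points of $(\mathrm{P}_n)$ to feasible points of $(\mathrm{P}_\infty)$ with the same objective value, and $(\mathrm{P}_\infty)$ has an optimal solution of this form (in particular optimal solutions of $(\mathrm{P}_n)$ are mapped to optimal solutions of $(\mathrm{P}_\infty)$).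
   Context: $\|\mathbf{A}\|_\star$ is the nuclear (trace) norm; for $\mathbf{A}\succeq0$ it equals $\operatorname{Tr}(\mathbf{A})$. For $u,v\in\mathcal{H}$, $u\otimes v$ denotes the rank-one operator $h\mapsto\langle v,h\rangle_{\mathcal{H}}u$. $\mathbf{A}\succeq0$ means $\mathbf{A}$ is a positive semi-definite (self-adjoint) operator. *)

theory Defs
  imports "HOL-Analysis.Analysis"
begin

definition tensor_op :: "'h::real_inner \<Rightarrow> 'h \<Rightarrow> ('h \<Rightarrow> 'h)" where
  "tensor_op u v = (\<lambda>h. inner v h *\<^sub>R u)"

definition psd_op :: "('h::real_inner \<Rightarrow> 'h) \<Rightarrow> bool" where
  "psd_op A \<longleftrightarrow> bounded_linear A \<and> (\<forall>u v. inner (A u) v = inner u (A v))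
      \<and> (\<forall>u. 0 \<le> inner u (A u))"

definition orthonormal_list :: "'h::real_inner list \<Rightarrow> bool" where
  "orthonormal_list es \<longleftrightarrow> (\<forall>i<length es. \<forall>j<length es.
      inner (es ! i) (es ! j) = (if i = j then 1 else 0))"

definition nuclear_norm :: "('h::real_inner \<Rightarrow> 'h) \<Rightarrow> ereal" where
  "nuclear_norm A = (SUP p \<in> {(es, fs). orthonormal_list es \<and> orthonormal_list fs
        \<and> length es = length fs}.
      ereal (\<Sum>k<length (fst p). \<bar>inner (snd p ! k) (A (fst p ! k))\<bar>))"

definition psd_mat :: "real^'n^'n \<Rightarrow> bool" where
  "psd_mat B \<longleftrightarrow> transpose B = B \<and> (\<forall>v. 0 \<le> v \<bullet> (B *v v))"

definition kmat :: "('x \<Rightarrow> 'x \<Rightarrow> real) \<Rightarrow> ('n::finite \<Rightarrow> 'x) \<Rightarrow> real^'n^'n" where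
  "kmat K x = (\<chi> i j. K (x i) (x j))"

definition Pn_feasible ::
  "('x \<Rightarrow> 'x \<Rightarrow> real) \<Rightarrow> ('x \<Rightarrow> 'x \<Rightarrow> real) \<Rightarrow> ('n::finite \<Rightarrow> 'x) \<Rightarrow> ('n \<Rightarrow> real)
     \<Rightarrow> real^'n \<Rightarrow> real^'n^'n \<Rightarrow> bool" where
  "Pn_feasible Km Kv x y \<alpha> B \<longleftrightarrow> psd_mat B \<and>
     (\<forall>i. column i (kmat Kv x) \<bullet> (B *v column i (kmat Kv x))
            \<ge> (y i - column i (kmat Km x) \<bullet> \<alpha>)\<^sup>2)"

definition Pn_obj ::
  "real \<Rightarrow> ('x \<Rightarrow> 'x \<Rightarrow> real) \<Rightarrow> ('x \<Rightarrow> 'x \<Rightarrow> real) \<Rightarrow> ('n::finite \<Rightarrow> 'x)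
     \<Rightarrow> real^'n \<Rightarrow> real^'n^'n \<Rightarrow> real" where
  "Pn_obj \<gamma> Km Kv x \<alpha> B = \<gamma> * (\<alpha> \<bullet> (kmat Km x *v \<alpha>)) + trace (kmat Kv x ** B)"

definition Pn_val ::
  "real \<Rightarrow> ('x \<Rightarrow> 'x \<Rightarrow> real) \<Rightarrow> ('x \<Rightarrow> 'x \<Rightarrow> real) \<Rightarrow> ('n::finite \<Rightarrow> 'x)
     \<Rightarrow> ('n \<Rightarrow> real) \<Rightarrow> ereal" where
  "Pn_val \<gamma> Km Kv x y = (INF p \<in> {(\<alpha>, B). Pn_feasible Km Kv x y \<alpha> B}.
      ereal (Pn_obj \<gamma> Km Kv x (fst p) (snd p)))"

definition Pinf_feasible ::
  "('x \<Rightarrow> 'hm::real_inner) \<Rightarrow> ('x \<Rightarrow> 'hv::real_inner) \<Rightarrow> ('n::finite \<Rightarrow> 'x) \<Rightarrow> ('n \<Rightarrow> real)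
     \<Rightarrow> 'hm \<Rightarrow> ('hv \<Rightarrow> 'hv) \<Rightarrow> bool" where
  "Pinf_feasible \<phi>m \<phi>v x y \<beta> A \<longleftrightarrow> psd_op A \<and>
     (\<forall>i. inner (\<phi>v (x i)) (A (\<phi>v (x i))) \<ge> (y i - inner (\<phi>m (x i)) \<beta>)\<^sup>2)"

definition Pinf_obj :: "real \<Rightarrow> 'hm::real_inner \<Rightarrow> ('hv::real_inner \<Rightarrow> 'hv) \<Rightarrow> ereal" where
  "Pinf_obj \<gamma> \<beta> A = ereal (\<gamma> * (norm \<beta>)\<^sup>2) + nuclear_norm A"

definition Pinf_val ::
  "real \<Rightarrow> ('x \<Rightarrow> 'hm::real_inner) \<Rightarrow> ('x \<Rightarrow> 'hv::real_inner) \<Rightarrow> ('n::finite \<Rightarrow> 'x)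
     \<Rightarrow> ('n \<Rightarrow> real) \<Rightarrow> ereal" where
  "Pinf_val \<gamma> \<phi>m \<phi>v x y = (INF p \<in> {(\<beta>, A). Pinf_feasible \<phi>m \<phi>v x y \<beta> A}.
      Pinf_obj \<gamma> (fst p) (snd p))"

definition embed_beta :: "('x \<Rightarrow> 'hm::real_vector) \<Rightarrow> ('n::finite \<Rightarrow> 'x) \<Rightarrow> real^'n \<Rightarrow> 'hm" where
  "embed_beta \<phi>m x \<alpha> = (\<Sum>i\<in>UNIV. (\<alpha> $ i) *\<^sub>R \<phi>m (x i))"

definition embed_A :: "('x \<Rightarrow> 'hv::real_inner) \<Rightarrow> ('n::finite \<Rightarrow> 'x) \<Rightarrow> real^'n^'n \<Rightarrow> ('hv \<Rightarrow> 'hv)" where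
  "embed_A \<phi>v x B = (\<lambda>h. \<Sum>i\<in>UNIV. \<Sum>j\<in>UNIV. (B $ i $ j) *\<^sub>R tensor_op (\<phi>v (x i)) (\<phi>v (x j)) h)"

end

theory Submission
  imports Defs
begin

lemma GS_step:
  fixes S :: "'a::real_inner set"
  assumes S: "pairwise orthogonal S" and fin: "finite S" and x: "x \<in> span S"
    shows "orthogonal x (a - (\<Sum>b\<in>S. (b \<bullet> a / (b \<bullet> b)) *\<^sub>R b))"
proof -
  have "orthogonal (a - (\<Sum>b\<in>S. (b \<bullet> a / (b \<bullet> b)) *\<^sub>R b)) x"
       if "x \<in> S" for x
  proof -
    have "a \<bullet> x = (\<Sum>y\<in>S. if y = x then y \<bullet> a else 0)"
      by (simp add: fin inner_commute that)
    also have "\<dots> =  (\<Sum>b\<in>S. b \<bullet> a * (b \<bullet> x) / (b \<bullet> b))"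
      apply (rule sum.cong [OF refl], simp)
      by (meson S orthogonal_def pairwise_def that)
   finally show ?thesis
     by (simp add: orthogonal_def algebra_simps inner_sum_left)
  qed
  then show ?thesis
    using orthogonal_to_span orthogonal_commute x by blast
qed

lemma orth_ext_aux:
  fixes S :: "'a::real_inner set"
  assumes "finite T" "finite S" "pairwise orthogonal S"
    shows "\<exists>U. finite U \<and> pairwise orthogonal (S \<union> U) \<and> span (S \<union> U) = span (S \<union> T)"
using assms
proof (induction arbitrary: S)
  case empty then show ?case
    by (metis finite.emptyI sup_bot_right)
next
  case (insert a T)
  define a' where "a' = a - (\<Sum>b\<in>S. (b \<bullet> a / (b \<bullet> b)) *\<^sub>R b)"
  obtain U where finU: "finite U" and orthU: "pairwise orthogonal (S \<union> insert a' U)"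
             and spanU: "span (insert a' S \<union> U) = span (insert a' S \<union> T)"
    by (rule exE [OF insert.IH [of "insert a' S"]])
      (auto simp: GS_step a'_def insert.prems orthogonal_commute
        pairwise_orthogonal_insert span_clauses)
  have "span (S \<union> insert a' U) = span (insert a' (S \<union> T))"
    using spanU by simp
  also have "\<dots> = span (insert a (S \<union> T))"
    by (simp add: a'_def span_neg span_sum span_base span_mul eq_span_insert_eq)
  also have "\<dots> = span (S \<union> insert a T)"
    by simp
  finally show ?case
    using orthU finU by blast
qed

definition orthonormal_set :: "'a::real_inner set \<Rightarrow> bool" where
  "orthonormal_set G \<longleftrightarrow> finite G \<and> (\<forall>g\<in>G. \<forall>h\<in>G. inner g h = (if g = h then 1 else 0))"

lemma onb_exists:
  fixes T :: "'a::real_inner set"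
  assumes "finite T"
  obtains G where "orthonormal_set G" "span G = span T"
proof -
  obtain U where U: "finite U" "pairwise orthogonal U" "span U = span T"
    using orth_ext_aux[OF assms, of "{}"] by auto
  define G where "G = (\<lambda>x. x /\<^sub>R norm x) ` (U - {0})"
  have "finite G" using U by (simp add: G_def)
  moreover have "\<forall>g\<in>G. \<forall>h\<in>G. inner g h = (if g = h then 1 else 0)"
  proof (intro ballI)
    fix g h assume g: "g \<in> G" and h: "h \<in> G"
    then obtain u v where u: "u \<in> U" "u \<noteq> 0" "g = u /\<^sub>R norm u" and v: "v \<in> U" "v \<noteq> 0" "h = v /\<^sub>R norm v"
      by (auto simp: G_def)
    show "inner g h = (if g = h then 1 else 0)"
    proof (cases "u = v")
      case True
      then have "g = h" using u v by simp
      moreover have "norm g = 1" using u by simp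
      ultimately show ?thesis by (simp add: dot_square_norm)
    next
      case False
      then have "inner u v = 0" using U(2) u v by (auto simp: pairwise_def orthogonal_def)
      moreover have "g \<noteq> h"
      proof
        assume "g = h"
        moreover have "norm g = 1" using u by simp
        ultimately have "inner g h = 1" by (simp add: dot_square_norm)
        moreover have "inner g h = 0" using \<open>inner u v = 0\<close> u v by simp
        ultimately show False by simp
      qed
      ultimately show ?thesis using u v by simp
    qed
  qed
  moreover have "span G = span U"
  proof -
    have "span G = span (U - {0})"
    proof (subst span_eq, intro conjI)
      show "G \<subseteq> span (U - {0})" unfolding G_def by (auto intro: span_mul span_base)
      show "U - {0} \<subseteq> span G"
      proof
        fix u assume u: "u \<in> U - {0}"
        then have "u /\<^sub>R norm u \<in> G" by (auto simp: G_def)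
        then have "norm u *\<^sub>R (u /\<^sub>R norm u) \<in> span G" by (intro span_mul span_base)
        then show "u \<in> span G" using u by simp
      qed
    qed
    also have "\<dots> = span U" by (metis span_insert_0 insert_Diff_single)
    finally show ?thesis .
  qed
  ultimately show ?thesis using that U(3) unfolding orthonormal_set_def by auto
qed

lemma onb_expand:
  assumes G: "orthonormal_set G" and w: "w \<in> span G"
  shows "w = (\<Sum>g\<in>G. inner g w *\<^sub>R g)"
proof -
  have fin: "finite G" using G by (simp add: orthonormal_set_def)
  obtain u where wu: "w = (\<Sum>v\<in>G. u v *\<^sub>R v)" using w span_finite[OF fin] by auto
  have "inner g w = u g" if "g \<in> G" for g
  proof -
    have "inner g w = (\<Sum>v\<in>G. u v * inner g v)" by (simp add: wu inner_sum_right)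
    also have "\<dots> = (\<Sum>v\<in>G. if v = g then u v else 0)"
      using G that by (intro sum.cong) (auto simp: orthonormal_set_def)
    also have "\<dots> = u g" using fin that by simp
    finally show ?thesis .
  qed
  then show ?thesis using wu by (metis (no_types, lifting) sum.cong)
qed

lemma onb_parseval:
  assumes G: "orthonormal_set G" and w: "w \<in> span G"
  shows "inner z w = (\<Sum>g\<in>G. inner g z * inner g w)"
proof -
  have "inner z w = inner z (\<Sum>g\<in>G. inner g w *\<^sub>R g)" using onb_expand[OF G w] by simp
  also have "\<dots> = (\<Sum>g\<in>G. inner g z * inner g w)" by (simp add: inner_sum_right inner_commute mult.commute)
  finally show ?thesis .
qed

lemma onb_bessel:
  assumes G: "orthonormal_set G"
  shows "(\<Sum>g\<in>G. (inner g z)\<^sup>2) \<le> inner z z"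
proof -
  have fin: "finite G" using G by (simp add: orthonormal_set_def)
  define p where "p = (\<Sum>g\<in>G. inner g z *\<^sub>R g)"
  have pspan: "p \<in> span G" unfolding p_def by (intro span_sum span_mul span_base)
  have "inner h p = inner h z" if "h \<in> G" for h
  proof -
    have "inner h p = (\<Sum>g\<in>G. inner g z * inner h g)" by (simp add: p_def inner_sum_right)
    also have "\<dots> = (\<Sum>g\<in>G. if g = h then inner g z else 0)"
      using G that by (intro sum.cong) (auto simp: orthonormal_set_def)
    also have "\<dots> = inner h z" using fin that by simp
    finally show ?thesis .
  qed
  then have pp: "inner p p = (\<Sum>g\<in>G. (inner g z)\<^sup>2)"
    using onb_parseval[OF G pspan, of p] by (simp add: power2_eq_square)
  have pz: "inner p z = inner p p"
    using onb_parseval[OF G pspan, of z] onb_parseval[OF G pspan, of p] \<open>\<And>h. h \<in> G \<Longrightarrow> inner h p = inner h z\<close>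
    by (simp add: inner_commute)
  have "0 \<le> inner (z - p) (z - p)" by simp
  then show ?thesis using pp pz by (simp add: inner_diff inner_commute)
qed


definition EA :: "('n::finite \<Rightarrow> 'h::real_inner) \<Rightarrow> real^'n^'n \<Rightarrow> 'h \<Rightarrow> 'h" where
  "EA v B h = (\<Sum>i\<in>UNIV. \<Sum>j\<in>UNIV. (B $ i $ j * inner (v j) h) *\<^sub>R v i)"

definition trK :: "('n::finite \<Rightarrow> 'h::real_inner) \<Rightarrow> real^'n^'n \<Rightarrow> real" where
  "trK v B = (\<Sum>i\<in>UNIV. \<Sum>j\<in>UNIV. B $ i $ j * inner (v i) (v j))"

lemma embed_A_EA: "embed_A \<phi> x B = EA (\<lambda>i. \<phi> (x i)) B"
  by (simp add: embed_A_def EA_def tensor_op_def fun_eq_iff)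

lemma inner_EA: "inner u (EA v B w) = (\<Sum>i\<in>UNIV. \<Sum>j\<in>UNIV. B $ i $ j * inner (v j) w * inner u (v i))"
  by (simp add: EA_def inner_sum_right)

lemma psd_sym: "psd_mat B \<Longrightarrow> B $ i $ j = B $ j $ i"
  unfolding psd_mat_def by (metis transpose_def vec_lambda_beta)

lemma quad_form: "v \<bullet> (B *v v) = (\<Sum>i\<in>UNIV. \<Sum>j\<in>UNIV. B $ i $ j * (v $ i) * (v $ j))"
  by (simp add: inner_vec_def matrix_vector_mult_def sum_distrib_left mult.commute mult.left_commute)

lemma psd_quad: "psd_mat B \<Longrightarrow> 0 \<le> (\<Sum>i\<in>UNIV. \<Sum>j\<in>UNIV. B $ i $ j * a i * a j)"
  using quad_form[of "\<chi> i. a i" B] unfolding psd_mat_def by (metis (no_types, lifting) sum.cong vec_lambda_beta)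

lemma psd_gram:
  fixes r :: "'n::finite \<Rightarrow> 'h::real_inner"
  assumes B: "psd_mat B"
  shows "0 \<le> (\<Sum>i\<in>UNIV. \<Sum>j\<in>UNIV. B $ i $ j * inner (r i) (r j))"
proof -
  obtain G where G: "orthonormal_set G" "span G = span (range r)"
    using onb_exists[of "range r"] by auto
  have fin: "finite G" using G by (simp add: orthonormal_set_def)
  have "inner (r i) (r j) = (\<Sum>g\<in>G. inner g (r i) * inner g (r j))" for i j
    using onb_parseval[OF G(1), of "r j" "r i"] G(2) by (simp add: span_base)
  then have "(\<Sum>i\<in>UNIV. \<Sum>j\<in>UNIV. B $ i $ j * inner (r i) (r j))
      = (\<Sum>g\<in>G. \<Sum>i\<in>UNIV. \<Sum>j\<in>UNIV. B $ i $ j * inner g (r i) * inner g (r j))"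
    by (simp add: sum_distrib_left sum.swap[of _ G] mult.assoc)
  also have "\<dots> \<ge> 0"
  proof (rule sum_nonneg)
    fix g show "0 \<le> (\<Sum>i\<in>UNIV. \<Sum>j\<in>UNIV. B $ i $ j * inner g (r i) * inner g (r j))"
      using psd_quad[OF B, of "\<lambda>i. inner g (r i)"] by simp
  qed
  finally show ?thesis .
qed

lemma psd_op_EA:
  assumes B: "psd_mat B"
  shows "psd_op (EA v B)"
proof -
  have "bounded_linear (EA v B)"
    unfolding EA_def
    by (intro bounded_linear_sum bounded_linear_scaleR_const bounded_linear_const_mult
          bounded_linear_inner_right)
  moreover have "inner (EA v B u) w = inner u (EA v B w)" for u w
  proof -
    have "inner (EA v B u) w = inner w (EA v B u)" by (simp add: inner_commute)
    also have "\<dots> = (\<Sum>i\<in>UNIV. \<Sum>j\<in>UNIV. B $ i $ j * inner (v j) u * inner w (v i))" by (rule inner_EA)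
    also have "\<dots> = (\<Sum>j\<in>UNIV. \<Sum>i\<in>UNIV. B $ i $ j * inner (v j) w * inner u (v i))"
      using psd_sym[OF B] by (intro sum.cong refl) (simp add: inner_commute)
    also have "\<dots> = (\<Sum>i\<in>UNIV. \<Sum>j\<in>UNIV. B $ i $ j * inner (v j) w * inner u (v i))"
      by (rule sum.swap)
    also have "\<dots> = inner u (EA v B w)" by (rule inner_EA[symmetric])
    finally show ?thesis .
  qed
  moreover have "0 \<le> inner u (EA v B u)" for u
    using psd_quad[OF B, of "\<lambda>i. inner (v i) u"] by (simp add: inner_EA inner_commute mult.commute mult.left_commute)
  ultimately show ?thesis unfolding psd_op_def by blast
qed

lemma psd_op_cs:
  assumes A: "psd_op A"
  shows "2 * \<bar>inner f (A e)\<bar> \<le> inner f (A f) + inner e (A e)"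
proof -
  have lin: "linear A" using A by (simp add: psd_op_def bounded_linear.linear)
  have sym: "inner (A u) w = inner u (A w)" for u w using A by (simp add: psd_op_def)
  have p1: "0 \<le> inner (f + e) (A (f + e))" using A by (simp add: psd_op_def)
  have p2: "0 \<le> inner (f - e) (A (f - e))" using A by (simp add: psd_op_def)
  have fe: "inner e (A f) = inner f (A e)" using sym[of e f] by (simp add: inner_commute)
  have "inner (f + e) (A (f + e)) = inner f (A f) + inner e (A e) + 2 * inner f (A e)"
    using fe by (simp add: linear_add[OF lin] inner_add)
  moreover have "inner (f - e) (A (f - e)) = inner f (A f) + inner e (A e) - 2 * inner f (A e)"
    using fe by (simp add: linear_diff[OF lin] inner_diff)
  ultimately show ?thesis using p1 p2 by linarith
qed


lemma trace_le:
  assumes B: "psd_mat B" and es: "orthonormal_list es"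
  shows "(\<Sum>k<length es. inner (es!k) (EA v B (es!k))) \<le> trK v B"
proof -
  define m where "m = length es"
  define E where "E k = es ! k" for k
  define a where "a i k = inner (E k) (v i)" for i k
  define q where "q i = (\<Sum>k<m. a i k *\<^sub>R E k)" for i
  define r where "r i = v i - q i" for i
  have EE: "k < m \<Longrightarrow> l < m \<Longrightarrow> inner (E k) (E l) = (if k = l then 1 else 0)" for k l
    using es by (simp add: orthonormal_list_def E_def m_def)
  have qq: "inner (q i) (q j) = (\<Sum>k<m. a i k * a j k)" for i j
  proof -
    have "inner (q i) (q j) = (\<Sum>k<m. \<Sum>l<m. a j k * (a i l * inner (E l) (E k)))"
      by (simp add: q_def inner_sum_left inner_sum_right sum_distrib_left mult.assoc)
    also have "\<dots> = (\<Sum>k<m. \<Sum>l<m. if l = k then a j k * a i l else 0)"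
      by (intro sum.cong refl) (simp add: EE)
    also have "\<dots> = (\<Sum>k<m. a i k * a j k)" by (simp add: mult.commute)
    finally show ?thesis .
  qed
  have vq: "inner (v i) (q j) = (\<Sum>k<m. a i k * a j k)" for i j
    by (simp add: q_def inner_sum_right a_def inner_commute mult.commute)
  have rr: "inner (r i) (r j) = inner (v i) (v j) - (\<Sum>k<m. a i k * a j k)" for i j
    using qq[of i j] vq[of i j] vq[of j i]
    by (simp add: r_def inner_diff inner_commute mult.commute)
  have lhs: "(\<Sum>k<length es. inner (es!k) (EA v B (es!k)))
      = (\<Sum>i\<in>UNIV. \<Sum>j\<in>UNIV. B $ i $ j * (\<Sum>k<m. a i k * a j k))"
  proof -
    have "(\<Sum>k<length es. inner (es!k) (EA v B (es!k)))
        = (\<Sum>k<m. \<Sum>i\<in>UNIV. \<Sum>j\<in>UNIV. B $ i $ j * (a i k * a j k))"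
      by (simp add: m_def inner_EA a_def E_def inner_commute mult.commute mult.left_commute)
    also have "\<dots> = (\<Sum>i\<in>UNIV. \<Sum>j\<in>UNIV. B $ i $ j * (\<Sum>k<m. a i k * a j k))"
      by (simp add: sum_distrib_left sum.swap[of _ "{..<m}"])
    finally show ?thesis .
  qed
  have "trK v B - (\<Sum>k<length es. inner (es!k) (EA v B (es!k)))
      = (\<Sum>i\<in>UNIV. \<Sum>j\<in>UNIV. B $ i $ j * inner (r i) (r j))"
    by (simp add: lhs trK_def rr right_diff_distrib sum_subtractf)
  moreover have "0 \<le> (\<Sum>i\<in>UNIV. \<Sum>j\<in>UNIV. B $ i $ j * inner (r i) (r j))"
    by (rule psd_gram[OF B])
  ultimately show ?thesis by linarith
qed

lemma nn_upper:
  fixes v :: "'n::finite \<Rightarrow> 'h::real_inner"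
  assumes B: "psd_mat B"
  shows "nuclear_norm (EA v B) \<le> ereal (trK v B)"
  unfolding nuclear_norm_def
proof (rule SUP_least, clarify)
  fix es fs :: "'h list"
  assume es: "orthonormal_list es" and fs: "orthonormal_list fs" and len: "length es = length fs"
  let ?A = "EA v B"
  have A: "psd_op ?A" by (rule psd_op_EA[OF B])
  have "2 * (\<Sum>k<length es. \<bar>inner (fs ! k) (?A (es ! k))\<bar>)
      \<le> (\<Sum>k<length es. inner (fs!k) (?A (fs!k)) + inner (es!k) (?A (es!k)))"
    unfolding sum_distrib_left by (intro sum_mono psd_op_cs[OF A])
  also have "\<dots> = (\<Sum>k<length fs. inner (fs!k) (?A (fs!k))) + (\<Sum>k<length es. inner (es!k) (?A (es!k)))"
    by (simp add: sum.distrib len)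
  also have "\<dots> \<le> trK v B + trK v B" by (intro add_mono trace_le[OF B] es fs)
  finally show "ereal (\<Sum>k<length (fst (es, fs)). \<bar>inner (snd (es, fs) ! k) (?A (fst (es, fs) ! k))\<bar>) \<le> ereal (trK v B)"
    by simp
qed

lemma nn_lower_list:
  assumes "orthonormal_list es" "orthonormal_list fs" "length es = length fs"
  shows "ereal (\<Sum>k<length es. \<bar>inner (fs ! k) (A (es ! k))\<bar>) \<le> nuclear_norm A"
  unfolding nuclear_norm_def
  by (rule SUP_upper2[where i="(es, fs)"]) (use assms in auto)

lemma nn_single:
  assumes "norm e = 1" "norm f = 1"
  shows "ereal \<bar>inner f (A e)\<bar> \<le> nuclear_norm A"
proof -
  have "orthonormal_list [e]" "orthonormal_list [f]"
    using assms by (auto simp: orthonormal_list_def dot_square_norm)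
  from nn_lower_list[OF this] show ?thesis by simp
qed

lemma nn_lower_set:
  assumes G: "orthonormal_set G"
  shows "ereal (\<Sum>g\<in>G. inner g (A g)) \<le> nuclear_norm A"
proof -
  have fin: "finite G" using G by (simp add: orthonormal_set_def)
  obtain xs where xs: "set xs = G" "distinct xs" using finite_distinct_list[OF fin] by blast
  have ol: "orthonormal_list xs"
    unfolding orthonormal_list_def
  proof (intro allI impI)
    fix i j assume i: "i < length xs" and j: "j < length xs"
    have "xs ! i \<in> G" "xs ! j \<in> G" using i j xs(1) by auto
    moreover have "(xs ! i = xs ! j) = (i = j)" using xs(2) i j by (simp add: nth_eq_iff_index_eq)
    ultimately show "inner (xs ! i) (xs ! j) = (if i = j then 1 else 0)"
      using G unfolding orthonormal_set_def by metis
  qed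
  have "(\<Sum>g\<in>G. inner g (A g)) = (\<Sum>k<length xs. inner (xs!k) (A (xs!k)))"
  proof -
    have "G = (!) xs ` {..<length xs}" using xs(1) by (auto simp: set_conv_nth)
    moreover have "inj_on ((!) xs) {..<length xs}" using xs(2) by (simp add: inj_on_nth)
    ultimately show ?thesis by (simp add: sum.reindex)
  qed
  also have "\<dots> \<le> (\<Sum>k<length xs. \<bar>inner (xs!k) (A (xs!k))\<bar>)" by (intro sum_mono) simp
  finally have "ereal (\<Sum>g\<in>G. inner g (A g)) \<le> ereal (\<Sum>k<length xs. \<bar>inner (xs!k) (A (xs!k))\<bar>)" by simp
  also have "\<dots> \<le> nuclear_norm A" by (rule nn_lower_list[OF ol ol refl])
  finally show ?thesis .
qed

lemma trK_onb:
  assumes G: "orthonormal_set G" "span G = span (range v)"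
  shows "(\<Sum>g\<in>G. inner g (EA v B g)) = trK v B"
proof -
  have par: "inner (v i) (v j) = (\<Sum>g\<in>G. inner g (v i) * inner g (v j))" for i j
    using onb_parseval[OF G(1), of "v j" "v i"] G(2) by (simp add: span_base)
  show ?thesis
    by (simp add: inner_EA trK_def par sum_distrib_left sum.swap[of _ G] inner_commute mult.commute mult.left_commute)
qed

lemma nn_EA:
  assumes B: "psd_mat B"
  shows "nuclear_norm (EA v B) = ereal (trK v B)"
proof (rule antisym[OF nn_upper[OF B]])
  obtain G where G: "orthonormal_set G" "span G = span (range v)"
    using onb_exists[of "range v"] by auto
  show "ereal (trK v B) \<le> nuclear_norm (EA v B)"
    using nn_lower_set[OF G(1), of "EA v B"] trK_onb[OF G] by simp
qed


lemma kmat_nth[simp]: "kmat K x $ i $ j = K (x i) (x j)"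
  by (simp add: kmat_def)

lemma column_nth[simp]: "column i A $ j = A $ j $ i"
  by (simp add: column_def)

context
  fixes Km Kv :: "'x \<Rightarrow> 'x \<Rightarrow> real"
    and \<phi>m :: "'x \<Rightarrow> 'hm::real_inner"
    and \<phi>v :: "'x \<Rightarrow> 'hv::real_inner"
    and x :: "'n::finite \<Rightarrow> 'x"
  assumes Km_feat: "\<And>a b. Km a b = inner (\<phi>m a) (\<phi>m b)"
    and Kv_feat: "\<And>a b. Kv a b = inner (\<phi>v a) (\<phi>v b)"
begin

lemma obj_alpha: "\<alpha> \<bullet> (kmat Km x *v \<alpha>) = inner (embed_beta \<phi>m x \<alpha>) (embed_beta \<phi>m x \<alpha>)"
  by (simp add: quad_form embed_beta_def inner_sum_left inner_sum_right Km_feat sum_distrib_left inner_commute mult.commute mult.left_commute)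

lemma trace_eq: "trace (kmat Kv x ** B) = trK (\<lambda>i. \<phi>v (x i)) B"
proof -
  have "trace (kmat Kv x ** B) = (\<Sum>i\<in>UNIV. \<Sum>k\<in>UNIV. inner (\<phi>v (x i)) (\<phi>v (x k)) * B $ k $ i)"
    unfolding trace_def matrix_matrix_mult_def by (simp add: Kv_feat)
  also have "\<dots> = (\<Sum>k\<in>UNIV. \<Sum>i\<in>UNIV. inner (\<phi>v (x i)) (\<phi>v (x k)) * B $ k $ i)"
    by (rule sum.swap)
  also have "\<dots> = trK (\<lambda>i. \<phi>v (x i)) B"
    unfolding trK_def by (simp add: mult.commute inner_commute)
  finally show ?thesis .
qed

lemma col_quad: "column i (kmat Kv x) \<bullet> (B *v column i (kmat Kv x))
    = inner (\<phi>v (x i)) (EA (\<lambda>i. \<phi>v (x i)) B (\<phi>v (x i)))"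
  by (simp add: quad_form inner_EA Kv_feat inner_commute mult.commute mult.left_commute)

lemma col_lin: "column i (kmat Km x) \<bullet> \<alpha> = inner (\<phi>m (x i)) (embed_beta \<phi>m x \<alpha>)"
  by (simp add: inner_vec_def embed_beta_def inner_sum_right Km_feat inner_commute mult.commute)

lemma obj_nonneg_parts:
  assumes "psd_mat B"
  shows "0 \<le> trK (\<lambda>i. \<phi>v (x i)) B"
  using psd_gram[OF assms] by (simp add: trK_def)

lemma embed_ok:
  fixes y :: "'n \<Rightarrow> real" and \<gamma> :: real
  assumes F: "Pn_feasible Km Kv x y \<alpha> B"
  shows "Pinf_feasible \<phi>m \<phi>v x y (embed_beta \<phi>m x \<alpha>) (embed_A \<phi>v x B)
    \<and> Pinf_obj \<gamma> (embed_beta \<phi>m x \<alpha>) (embed_A \<phi>v x B) = ereal (Pn_obj \<gamma> Km Kv x \<alpha> B)"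
proof -
  have B: "psd_mat B" using F by (simp add: Pn_feasible_def)
  have "Pinf_feasible \<phi>m \<phi>v x y (embed_beta \<phi>m x \<alpha>) (embed_A \<phi>v x B)"
    using F psd_op_EA[OF B] unfolding Pinf_feasible_def Pn_feasible_def embed_A_EA
    by (simp add: col_quad col_lin)
  moreover have "Pinf_obj \<gamma> (embed_beta \<phi>m x \<alpha>) (embed_A \<phi>v x B) = ereal (Pn_obj \<gamma> Km Kv x \<alpha> B)"
    unfolding Pinf_obj_def Pn_obj_def embed_A_EA nn_EA[OF B]
    by (simp add: obj_alpha trace_eq power2_norm_eq_inner)
  ultimately show ?thesis by blast
qed

end

lemma span_range_rep:
  fixes v :: "'n::finite \<Rightarrow> 'h::real_vector"
  assumes "w \<in> span (range v)"
  shows "\<exists>c. w = (\<Sum>i\<in>UNIV. c i *\<^sub>R v i)"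
  using assms
proof (induction rule: span_induct_alt)
  case base
  then show ?case by (rule exI[of _ "\<lambda>_. 0"]) simp
next
  case (step a u w)
  then obtain c where c: "w = (\<Sum>i\<in>UNIV. c i *\<^sub>R v i)" by blast
  from step obtain k where u: "u = v k" by auto
  have "a *\<^sub>R u + w = (\<Sum>i\<in>UNIV. (c i + (if i = k then a else 0)) *\<^sub>R v i)"
    by (simp add: c u scaleR_add_left sum.distrib if_distrib[of "\<lambda>t. t *\<^sub>R v _"] cong: if_cong)
  then show ?case by fast
qed

lemma sum_swap4: "(\<Sum>a\<in>A. \<Sum>b\<in>B. \<Sum>g\<in>C. \<Sum>h\<in>D. f a b g h) = (\<Sum>g\<in>C. \<Sum>h\<in>D. \<Sum>a\<in>A. \<Sum>b\<in>B. f a b g h)"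
proof -
  have "(\<Sum>a\<in>A. \<Sum>b\<in>B. \<Sum>g\<in>C. \<Sum>h\<in>D. f a b g h) = (\<Sum>a\<in>A. \<Sum>g\<in>C. \<Sum>b\<in>B. \<Sum>h\<in>D. f a b g h)"
    by (rule sum.cong[OF refl], rule sum.swap)
  also have "\<dots> = (\<Sum>a\<in>A. \<Sum>g\<in>C. \<Sum>h\<in>D. \<Sum>b\<in>B. f a b g h)"
    by (rule sum.cong[OF refl], rule sum.cong[OF refl], rule sum.swap)
  also have "\<dots> = (\<Sum>g\<in>C. \<Sum>a\<in>A. \<Sum>h\<in>D. \<Sum>b\<in>B. f a b g h)"
    by (rule sum.swap)
  also have "\<dots> = (\<Sum>g\<in>C. \<Sum>h\<in>D. \<Sum>a\<in>A. \<Sum>b\<in>B. f a b g h)"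
    by (rule sum.cong[OF refl], rule sum.swap)
  finally show ?thesis .
qed

lemma abs_le_sq: "\<bar>u::real\<bar> \<le> 1 + u\<^sup>2"
proof (cases "\<bar>u\<bar> \<le> 1")
  case True
  then show ?thesis by (simp add: add_increasing2)
next
  case False
  then have "\<bar>u\<bar> * 1 \<le> \<bar>u\<bar> * \<bar>u\<bar>" by (intro mult_left_mono) auto
  then show ?thesis by (simp add: power2_eq_square abs_mult_self_eq)
qed

context
  fixes vv :: "'n::finite \<Rightarrow> 'h::real_inner" and G :: "'h set" and c :: "'h \<Rightarrow> 'n \<Rightarrow> real"
  assumes G: "orthonormal_set G" "span G = span (range vv)"
    and crep: "\<And>g. g \<in> G \<Longrightarrow> g = (\<Sum>i\<in>UNIV. c g i *\<^sub>R vv i)"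
begin

definition Bred :: "('h \<Rightarrow> 'h) \<Rightarrow> real^'n^'n" where
  "Bred A = (\<chi> i j. \<Sum>g\<in>G. \<Sum>g'\<in>G. c g i * inner g (A g') * c g' j)"

lemma finG: "finite G" using G by (simp add: orthonormal_set_def)

lemma GG: "g \<in> G \<Longrightarrow> g' \<in> G \<Longrightarrow> inner g g' = (if g = g' then 1 else 0)"
  using G by (simp add: orthonormal_set_def)

lemma csum_left: "g \<in> G \<Longrightarrow> (\<Sum>b\<in>UNIV. c g b * inner (vv b) w) = inner g w"
  by (subst (2) crep) (simp_all add: inner_sum_left)

lemma csum_right: "g \<in> G \<Longrightarrow> (\<Sum>b\<in>UNIV. c g b * inner w (vv b)) = inner w g"
  by (subst (2) crep) (simp_all add: inner_sum_right)

lemma vv_span: "vv i \<in> span G" using G(2) by (simp add: span_base)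

lemma Bred_expand:
  "(\<Sum>a\<in>UNIV. \<Sum>b\<in>UNIV. Bred A $ a $ b * P a * Q b)
   = (\<Sum>g\<in>G. \<Sum>g'\<in>G. inner g (A g') * (\<Sum>a\<in>UNIV. c g a * P a) * (\<Sum>b\<in>UNIV. c g' b * Q b))"
proof -
  have "(\<Sum>a\<in>UNIV. \<Sum>b\<in>UNIV. Bred A $ a $ b * P a * Q b)
      = (\<Sum>a\<in>UNIV. \<Sum>b\<in>UNIV. \<Sum>g\<in>G. \<Sum>g'\<in>G. inner g (A g') * (c g a * P a) * (c g' b * Q b))"
    by (simp add: Bred_def sum_distrib_left sum_distrib_right mult.commute mult.left_commute)
  also have "\<dots> = (\<Sum>g\<in>G. \<Sum>g'\<in>G. \<Sum>a\<in>UNIV. \<Sum>b\<in>UNIV. inner g (A g') * (c g a * P a) * (c g' b * Q b))"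
    by (rule sum_swap4)
  also have "\<dots> = (\<Sum>g\<in>G. \<Sum>g'\<in>G. inner g (A g') * (\<Sum>a\<in>UNIV. c g a * P a) * (\<Sum>b\<in>UNIV. c g' b * Q b))"
  proof (intro sum.cong refl)
    fix g g'
    show "(\<Sum>a\<in>UNIV. \<Sum>b\<in>UNIV. inner g (A g') * (c g a * P a) * (c g' b * Q b))
      = inner g (A g') * (\<Sum>a\<in>UNIV. c g a * P a) * (\<Sum>b\<in>UNIV. c g' b * Q b)"
    proof -
      have "inner g (A g') * (\<Sum>a\<in>UNIV. c g a * P a) * (\<Sum>b\<in>UNIV. c g' b * Q b)
          = inner g (A g') * ((\<Sum>a\<in>UNIV. c g a * P a) * (\<Sum>b\<in>UNIV. c g' b * Q b))"
        by (rule mult.assoc)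
      also have "\<dots> = inner g (A g') * (\<Sum>a\<in>UNIV. \<Sum>b\<in>UNIV. (c g a * P a) * (c g' b * Q b))"
        by (simp only: sum_product)
      also have "\<dots> = (\<Sum>a\<in>UNIV. \<Sum>b\<in>UNIV. inner g (A g') * ((c g a * P a) * (c g' b * Q b)))"
        by (simp only: sum_distrib_left)
      finally show ?thesis by (simp only: mult.assoc)
    qed
  qed
  finally show ?thesis .
qed

context
  fixes A :: "'h \<Rightarrow> 'h"
  assumes A: "psd_op A"
begin

lemma linA: "linear A" using A by (simp add: psd_op_def bounded_linear.linear)
lemma symA: "inner (A u) w = inner u (A w)" using A by (simp add: psd_op_def)

lemma quad_Bred: "inner (vv i) (EA vv (Bred A) (vv i)) = inner (vv i) (A (vv i))"
proof -
  have "inner (vv i) (EA vv (Bred A) (vv i))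
      = (\<Sum>a\<in>UNIV. \<Sum>b\<in>UNIV. Bred A $ a $ b * inner (vv i) (vv a) * inner (vv b) (vv i))"
    by (simp add: inner_EA mult.commute mult.left_commute)
  also have "\<dots> = (\<Sum>g\<in>G. \<Sum>g'\<in>G. inner g (A g') * inner (vv i) g * inner g' (vv i))"
    by (simp add: Bred_expand csum_left csum_right cong: sum.cong)
  also have "\<dots> = inner (vv i) (A (vv i))"
  proof -
    have "A (vv i) = (\<Sum>g'\<in>G. inner g' (vv i) *\<^sub>R A g')"
      by (subst onb_expand[OF G(1) vv_span]) (simp add: linear_sum[OF linA] linear_scale[OF linA])
    then have "inner (vv i) (A (vv i)) = (\<Sum>g'\<in>G. inner g' (vv i) * inner (vv i) (A g'))"
      by (simp add: inner_sum_right)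
    also have "\<dots> = (\<Sum>g'\<in>G. \<Sum>g\<in>G. inner g' (vv i) * (inner g (A g') * inner g (vv i)))"
    proof (rule sum.cong[OF refl])
      fix g' assume "g' \<in> G"
      have "inner (vv i) (A g') = (\<Sum>g\<in>G. inner g (A g') * inner g (vv i))"
        using onb_parseval[OF G(1) vv_span, of "A g'" i] by (simp add: inner_commute)
      then show "inner g' (vv i) * inner (vv i) (A g') = (\<Sum>g\<in>G. inner g' (vv i) * (inner g (A g') * inner g (vv i)))"
        by (simp add: sum_distrib_left)
    qed
    also have "\<dots> = (\<Sum>g\<in>G. \<Sum>g'\<in>G. inner g (A g') * inner (vv i) g * inner g' (vv i))"
      by (subst sum.swap) (simp add: inner_commute mult.commute mult.left_commute)
    finally show ?thesis by simp
  qed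
  finally show ?thesis .
qed

lemma trK_Bred: "trK vv (Bred A) = (\<Sum>g\<in>G. inner g (A g))"
proof -
  have "trK vv (Bred A) = (\<Sum>a\<in>UNIV. \<Sum>b\<in>UNIV. Bred A $ a $ b * 1 * 1 * inner (vv a) (vv b))"
    by (simp add: trK_def)
  also have "\<dots> = (\<Sum>g\<in>G. \<Sum>g'\<in>G. inner g (A g') * inner g g')"
  proof -
    have "(\<Sum>a\<in>UNIV. \<Sum>b\<in>UNIV. Bred A $ a $ b * 1 * 1 * inner (vv a) (vv b))
       = (\<Sum>a\<in>UNIV. \<Sum>b\<in>UNIV. \<Sum>g\<in>G. \<Sum>g'\<in>G. inner g (A g') * (c g a * c g' b * inner (vv a) (vv b)))"
      by (simp add: Bred_def sum_distrib_left sum_distrib_right mult.commute mult.left_commute)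
    also have "\<dots> = (\<Sum>g\<in>G. \<Sum>g'\<in>G. \<Sum>a\<in>UNIV. \<Sum>b\<in>UNIV. inner g (A g') * (c g a * c g' b * inner (vv a) (vv b)))"
      by (rule sum_swap4)
    also have "\<dots> = (\<Sum>g\<in>G. \<Sum>g'\<in>G. inner g (A g') * (\<Sum>a\<in>UNIV. c g a * (\<Sum>b\<in>UNIV. c g' b * inner (vv a) (vv b))))"
      by (simp add: sum_distrib_left mult.assoc)
    also have "\<dots> = (\<Sum>g\<in>G. \<Sum>g'\<in>G. inner g (A g') * inner g g')"
      by (intro sum.cong refl) (simp add: csum_right csum_left inner_commute)
    finally show ?thesis .
  qed
  also have "\<dots> = (\<Sum>g\<in>G. inner g (A g))"
  proof (rule sum.cong[OF refl])
    fix g assume g: "g \<in> G"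
    have "(\<Sum>g'\<in>G. inner g (A g') * inner g g') = (\<Sum>g'\<in>G. if g = g' then inner g (A g') else 0)"
      by (rule sum.cong[OF refl]) (simp add: GG[OF g])
    also have "\<dots> = inner g (A g)" using finG g by simp
    finally show "(\<Sum>g'\<in>G. inner g (A g') * inner g g') = inner g (A g)" .
  qed
  finally show ?thesis .
qed

lemma psd_Bred: "psd_mat (Bred A)"
  unfolding psd_mat_def
proof (intro conjI allI)
  show "transpose (Bred A) = Bred A"
  proof -
    have sy: "inner b (A a) = inner a (A b)" for a b by (metis symA inner_commute)
    have "Bred A $ j $ i = Bred A $ i $ j" for i j
    proof -
      have "Bred A $ j $ i = (\<Sum>g\<in>G. \<Sum>g'\<in>G. c g j * inner g (A g') * c g' i)"
        by (simp add: Bred_def)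
      also have "\<dots> = (\<Sum>g'\<in>G. \<Sum>g\<in>G. c g j * inner g (A g') * c g' i)"
        by (rule sum.swap)
      also have "\<dots> = (\<Sum>g'\<in>G. \<Sum>g\<in>G. c g' i * inner g' (A g) * c g j)"
        by (rule sum.cong[OF refl], rule sum.cong[OF refl]) (simp only: sy[of _ _] mult.commute mult.left_commute)
      also have "\<dots> = Bred A $ i $ j" by (simp add: Bred_def)
      finally show ?thesis .
    qed
    then show ?thesis unfolding transpose_def vec_eq_iff by simp
  qed
  fix v :: "real^'n"
  define s where "s g = (\<Sum>a\<in>UNIV. c g a * v $ a)" for g
  define w where "w = (\<Sum>g\<in>G. s g *\<^sub>R g)"
  have "v \<bullet> (Bred A *v v) = (\<Sum>g\<in>G. \<Sum>g'\<in>G. inner g (A g') * s g * s g')"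
    by (simp add: quad_form Bred_expand s_def)
  also have "\<dots> = (\<Sum>a\<in>G. \<Sum>n\<in>G. s a * (s n * inner n (A a)))"
    by (rule trans[OF sum.swap]) (simp add: ac_simps)
  also have "\<dots> = inner w (A w)"
    by (simp add: w_def linear_sum[OF linA] linear_scale[OF linA] inner_sum_left inner_sum_right
        sum_distrib_left mult.commute mult.left_commute)
  also have "\<dots> \<ge> 0" using A by (simp add: psd_op_def)
  finally show "0 \<le> v \<bullet> (Bred A *v v)" .
qed

lemma Bred_bound:
  assumes N: "nuclear_norm A \<le> ereal N"
  shows "\<bar>Bred A $ i $ j\<bar> \<le> (\<Sum>g\<in>G. \<Sum>g'\<in>G. \<bar>c g i\<bar> * N * \<bar>c g' j\<bar>)"
proof -
  have nG: "g \<in> G \<Longrightarrow> norm g = 1" for g using GG[of g g] by (simp add: norm_eq_sqrt_inner)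
  have b: "\<bar>inner g (A g')\<bar> \<le> N" if "g \<in> G" "g' \<in> G" for g g'
    using nn_single[OF nG[OF that(2)] nG[OF that(1)], of A] N by (metis ereal_less_eq(3) order_trans)
  have "\<bar>Bred A $ i $ j\<bar> \<le> (\<Sum>g\<in>G. \<Sum>g'\<in>G. \<bar>c g i * inner g (A g') * c g' j\<bar>)"
    unfolding Bred_def by (simp, rule order_trans[OF sum_abs], intro sum_mono sum_abs)
  also have "\<dots> \<le> (\<Sum>g\<in>G. \<Sum>g'\<in>G. \<bar>c g i\<bar> * N * \<bar>c g' j\<bar>)"
    unfolding abs_mult by (intro sum_mono mult_right_mono mult_left_mono b) auto
  finally show ?thesis .
qed

end
end


definition EB :: "('n::finite \<Rightarrow> 'h::real_vector) \<Rightarrow> real^'n \<Rightarrow> 'h" where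
  "EB v \<alpha> = (\<Sum>i\<in>UNIV. (\<alpha> $ i) *\<^sub>R v i)"

lemma embed_beta_EB: "embed_beta \<phi> x \<alpha> = EB (\<lambda>i. \<phi> (x i)) \<alpha>"
  by (simp add: embed_beta_def EB_def)

context
  fixes vm :: "'n::finite \<Rightarrow> 'h::real_inner" and H :: "'h set" and d :: "'h \<Rightarrow> 'n \<Rightarrow> real"
  assumes H: "orthonormal_set H" "span H = span (range vm)"
    and drep: "\<And>h. h \<in> H \<Longrightarrow> h = (\<Sum>i\<in>UNIV. d h i *\<^sub>R vm i)"
begin

definition ared :: "'h \<Rightarrow> real^'n" where
  "ared \<beta> = (\<chi> i. \<Sum>h\<in>H. d h i * inner h \<beta>)"

lemma finH: "finite H" using H by (simp add: orthonormal_set_def)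

lemma HH: "h \<in> H \<Longrightarrow> h' \<in> H \<Longrightarrow> inner h h' = (if h = h' then 1 else 0)"
  using H by (simp add: orthonormal_set_def)

lemma EB_ared: "EB vm (ared \<beta>) = (\<Sum>h\<in>H. inner h \<beta> *\<^sub>R h)"
proof -
  have "EB vm (ared \<beta>) = (\<Sum>i\<in>UNIV. \<Sum>h\<in>H. inner h \<beta> *\<^sub>R (d h i *\<^sub>R vm i))"
    by (simp add: EB_def ared_def scaleR_sum_left mult.commute)
  also have "\<dots> = (\<Sum>h\<in>H. \<Sum>i\<in>UNIV. inner h \<beta> *\<^sub>R (d h i *\<^sub>R vm i))" by (rule sum.swap)
  also have "\<dots> = (\<Sum>h\<in>H. inner h \<beta> *\<^sub>R h)"
  proof (intro sum.cong refl)
    fix h assume h: "h \<in> H"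
    show "(\<Sum>i\<in>UNIV. inner h \<beta> *\<^sub>R (d h i *\<^sub>R vm i)) = inner h \<beta> *\<^sub>R h"
    proof -
      have "(\<Sum>i\<in>UNIV. inner h \<beta> *\<^sub>R (d h i *\<^sub>R vm i)) = inner h \<beta> *\<^sub>R (\<Sum>i\<in>UNIV. d h i *\<^sub>R vm i)"
        by (simp only: scaleR_sum_right)
      also have "\<dots> = inner h \<beta> *\<^sub>R h" by (simp only: drep[OF h, symmetric])
      finally show ?thesis .
    qed
  qed
  finally show ?thesis .
qed

lemma vm_span: "vm i \<in> span H" using H(2) by (simp add: span_base)

lemma lin_ared: "inner (vm i) (EB vm (ared \<beta>)) = inner (vm i) \<beta>"
  using onb_parseval[OF H(1) vm_span, of \<beta> i]
  by (simp add: EB_ared inner_sum_right inner_commute)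

lemma norm_ared: "inner (EB vm (ared \<beta>)) (EB vm (ared \<beta>)) \<le> inner \<beta> \<beta>"
proof -
  have "inner (EB vm (ared \<beta>)) (EB vm (ared \<beta>)) = (\<Sum>h\<in>H. \<Sum>h'\<in>H. inner h' \<beta> * (inner h \<beta> * inner h h'))"
    by (simp add: EB_ared inner_sum_left inner_sum_right sum_distrib_left mult.assoc inner_commute)
  also have "\<dots> = (\<Sum>h\<in>H. (inner h \<beta>)\<^sup>2)"
    by (intro sum.cong refl) (simp add: HH finH if_distrib power2_eq_square cong: if_cong)
  also have "\<dots> \<le> inner \<beta> \<beta>" by (rule onb_bessel[OF H(1)])
  finally show ?thesis .
qed

lemma ared_bound:
  "\<bar>ared \<beta> $ i\<bar> \<le> (\<Sum>h\<in>H. \<bar>d h i\<bar> * (\<Sum>k\<in>UNIV. \<bar>d h k\<bar> * \<bar>inner (vm k) \<beta>\<bar>))"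
proof -
  have hb: "inner h \<beta> = (\<Sum>k\<in>UNIV. d h k * inner (vm k) \<beta>)" if "h \<in> H" for h
    by (subst drep[OF that]) (simp add: inner_sum_left)
  have "\<bar>ared \<beta> $ i\<bar> \<le> (\<Sum>h\<in>H. \<bar>d h i * inner h \<beta>\<bar>)" by (simp add: ared_def sum_abs)
  also have "\<dots> \<le> (\<Sum>h\<in>H. \<bar>d h i\<bar> * (\<Sum>k\<in>UNIV. \<bar>d h k\<bar> * \<bar>inner (vm k) \<beta>\<bar>))"
  proof (intro sum_mono)
    fix h assume h: "h \<in> H"
    have "\<bar>inner h \<beta>\<bar> \<le> (\<Sum>k\<in>UNIV. \<bar>d h k\<bar> * \<bar>inner (vm k) \<beta>\<bar>)"
      unfolding hb[OF h] by (rule order_trans[OF sum_abs]) (simp add: abs_mult)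
    then show "\<bar>d h i * inner h \<beta>\<bar> \<le> \<bar>d h i\<bar> * (\<Sum>k\<in>UNIV. \<bar>d h k\<bar> * \<bar>inner (vm k) \<beta>\<bar>)"
      unfolding abs_mult by (intro mult_left_mono) auto
  qed
  finally show ?thesis .
qed

end

lemma attain_generic:
  fixes f :: "'a::topological_space \<Rightarrow> real"
  assumes cS: "compact S" and sub: "S \<subseteq> {p. P p}"
    and v: "(INF p\<in>{p. P p}. ereal (f p)) = ereal v"
    and cont: "continuous_on S f"
    and red: "\<And>p. P p \<Longrightarrow> f p < v + 1 \<Longrightarrow> \<exists>q\<in>S. f q \<le> f p"
  shows "\<exists>p. P p \<and> ereal (f p) = ereal v"
proof -
  have "(INF p\<in>{p. P p}. ereal (f p)) < ereal (v + 1)" using v by simp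
  then obtain p0 where "P p0" "ereal (f p0) < ereal (v + 1)" by (auto simp: INF_less_iff)
  then obtain q where "q \<in> S" using red by force
  then have ne: "S \<noteq> {}" by blast
  obtain q0 where q0: "q0 \<in> S" and mn: "\<And>q. q \<in> S \<Longrightarrow> f q0 \<le> f q"
    using continuous_attains_inf[OF cS ne cont] by blast
  have Pq0: "P q0" using q0 sub by blast
  have ge: "ereal v \<le> ereal (f q0)" using Pq0 v[symmetric] by (auto intro: INF_lower)
  have le: "f q0 \<le> v"
  proof (rule ccontr)
    assume "\<not> f q0 \<le> v"
    then have "(INF p\<in>{p. P p}. ereal (f p)) < ereal (min (f q0) (v + 1))" using v by simp
    then have "\<exists>p\<in>{p. P p}. ereal (f p) < ereal (min (f q0) (v + 1))" by (simp only: INF_less_iff)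
    then obtain p where p0: "P p" "ereal (f p) < ereal (min (f q0) (v + 1))" by blast
    have p1: "f p < f q0" "f p < v + 1" using p0(2) by simp_all
    obtain q where q: "q \<in> S" "f q \<le> f p" using red[OF p0(1) p1(2)] by blast
    show False using mn[OF q(1)] q(2) p1(1) by simp
  qed
  show ?thesis using Pq0 ge le by (intro exI[of _ q0]) simp
qed

lemma feas_coord:
  "Pn_feasible Km Kv x y a B \<longleftrightarrow> (\<forall>i j. B$i$j = B$j$i) \<and> (\<forall>v. 0 \<le> (\<Sum>i\<in>UNIV. \<Sum>j\<in>UNIV. B$i$j * v$i * v$j))
     \<and> (\<forall>i. (y i - (\<Sum>k\<in>UNIV. Km (x k) (x i) * a$k))\<^sup>2 \<le> (\<Sum>k\<in>UNIV. \<Sum>l\<in>UNIV. B$k$l * Kv (x k) (x i) * Kv (x l) (x i)))"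
proof -
  have t: "transpose B = B \<longleftrightarrow> (\<forall>i j. B$i$j = B$j$i)"
    by (auto simp: transpose_def vec_eq_iff)
  show ?thesis
    unfolding Pn_feasible_def psd_mat_def t quad_form
    by (simp add: inner_vec_def)
qed

lemma obj_coord:
  "Pn_obj \<gamma> Km Kv x a B = \<gamma> * (\<Sum>i\<in>UNIV. \<Sum>j\<in>UNIV. Km (x i) (x j) * a$i * a$j)
      + (\<Sum>i\<in>UNIV. \<Sum>k\<in>UNIV. Kv (x i) (x k) * B$k$i)"
  unfolding Pn_obj_def quad_form trace_def matrix_matrix_mult_def by simp

lemma quad_le_nn:
  assumes lin: "linear A" and N: "nuclear_norm A \<le> ereal N"
  shows "inner u (A u) \<le> (norm u)\<^sup>2 * N"
proof (cases "u = 0")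
  case True
  then show ?thesis using linear_0[OF lin] by simp
next
  case False
  define e where "e = u /\<^sub>R norm u"
  have ne: "norm e = 1" using False by (simp add: e_def)
  have "\<bar>inner e (A e)\<bar> \<le> N" using nn_single[OF ne ne, of A] N by (metis ereal_less_eq(3) order_trans)
  moreover have "u = norm u *\<^sub>R e" using False by (simp add: e_def)
  then have "inner u (A u) = (norm u)\<^sup>2 * inner e (A e)"
    by (metis (no_types) linear_scale[OF lin] inner_scaleR_left inner_scaleR_right power2_eq_square mult.assoc)
  ultimately show ?thesis by (simp add: mult_left_mono)
qed


lemma norm_mat_le: "norm (B :: real^'n::finite^'m::finite) \<le> (\<Sum>i\<in>UNIV. \<Sum>j\<in>UNIV. \<bar>B $ i $ j\<bar>)"
proof -
  have "norm B \<le> (\<Sum>i\<in>UNIV. norm (B $ i))"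
    unfolding norm_vec_def by (rule L2_set_le_sum) simp
  also have "\<dots> \<le> (\<Sum>i\<in>UNIV. \<Sum>j\<in>UNIV. \<bar>B $ i $ j\<bar>)"
    by (intro sum_mono norm_le_l1_cart)
  finally show ?thesis .
qed

theorem mainTheorem3:
  fixes Km Kv :: "'x \<Rightarrow> 'x \<Rightarrow> real"
    and \<phi>m :: "'x \<Rightarrow> 'hm::{real_inner,complete_space}"
    and \<phi>v :: "'x \<Rightarrow> 'hv::{real_inner,complete_space}"
    and x :: "'n::finite \<Rightarrow> 'x"
    and y :: "'n \<Rightarrow> real"
    and \<gamma> :: real
  assumes Km_feat: "\<And>a b. Km a b = inner (\<phi>m a) (\<phi>m b)"
    and Kv_feat: "\<And>a b. Kv a b = inner (\<phi>v a) (\<phi>v b)"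
    and Hm_rkhs: "closure (span (range \<phi>m)) = UNIV"
    and Hv_rkhs: "closure (span (range \<phi>v)) = UNIV"
    and gamma_nonneg: "\<gamma> \<ge> 0"
  shows "Pn_val \<gamma> Km Kv x y = Pinf_val \<gamma> \<phi>m \<phi>v x y
    \<and> (\<forall>\<alpha> B. Pn_feasible Km Kv x y \<alpha> B \<longrightarrow>
          Pinf_feasible \<phi>m \<phi>v x y (embed_beta \<phi>m x \<alpha>) (embed_A \<phi>v x B)
          \<and> Pinf_obj \<gamma> (embed_beta \<phi>m x \<alpha>) (embed_A \<phi>v x B) = ereal (Pn_obj \<gamma> Km Kv x \<alpha> B))
    \<and> (\<forall>\<alpha> B. Pn_feasible Km Kv x y \<alpha> B
             \<and> ereal (Pn_obj \<gamma> Km Kv x \<alpha> B) = Pn_val \<gamma> Km Kv x y \<longrightarrow>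
          Pinf_feasible \<phi>m \<phi>v x y (embed_beta \<phi>m x \<alpha>) (embed_A \<phi>v x B)
          \<and> Pinf_obj \<gamma> (embed_beta \<phi>m x \<alpha>) (embed_A \<phi>v x B) = Pinf_val \<gamma> \<phi>m \<phi>v x y)
    \<and> ((\<exists>\<beta> A. Pinf_feasible \<phi>m \<phi>v x y \<beta> A) \<longrightarrow>
          (\<exists>\<alpha> B. transpose B = B
             \<and> Pinf_feasible \<phi>m \<phi>v x y (embed_beta \<phi>m x \<alpha>) (embed_A \<phi>v x B)
             \<and> Pinf_obj \<gamma> (embed_beta \<phi>m x \<alpha>) (embed_A \<phi>v x B) = Pinf_val \<gamma> \<phi>m \<phi>v x y))"
proof -
  let ?vm = "\<lambda>i. \<phi>m (x i)" and ?vv = "\<lambda>i. \<phi>v (x i)"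
  obtain G where G: "orthonormal_set G" "span G = span (range ?vv)"
    using onb_exists[of "range ?vv"] by auto
  have "\<forall>g\<in>G. \<exists>c. g = (\<Sum>i\<in>UNIV. c i *\<^sub>R ?vv i)"
    using G(2) span_base[of _ G] span_range_rep by metis
  then obtain c where crep: "\<And>g. g \<in> G \<Longrightarrow> g = (\<Sum>i\<in>UNIV. c g i *\<^sub>R ?vv i)"
    by metis
  obtain H where H: "orthonormal_set H" "span H = span (range ?vm)"
    using onb_exists[of "range ?vm"] by auto
  have "\<forall>h\<in>H. \<exists>d. h = (\<Sum>i\<in>UNIV. d i *\<^sub>R ?vm i)"
    using H(2) span_base[of _ H] span_range_rep by metis
  then obtain d where drep: "\<And>h. h \<in> H \<Longrightarrow> h = (\<Sum>i\<in>UNIV. d h i *\<^sub>R ?vm i)"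
    by metis

  have emb: "Pinf_feasible \<phi>m \<phi>v x y (embed_beta \<phi>m x \<alpha>) (embed_A \<phi>v x B)
    \<and> Pinf_obj \<gamma> (embed_beta \<phi>m x \<alpha>) (embed_A \<phi>v x B) = ereal (Pn_obj \<gamma> Km Kv x \<alpha> B)"
    if "Pn_feasible Km Kv x y \<alpha> B" for \<alpha> B
    by (rule embed_ok[OF Km_feat Kv_feat that])
  have cq: "column i (kmat Kv x) \<bullet> (B *v column i (kmat Kv x))
    = inner (\<phi>v (x i)) (EA (\<lambda>i. \<phi>v (x i)) B (\<phi>v (x i)))" for i B
    by (rule col_quad[OF Km_feat Kv_feat])
  have cl: "column i (kmat Km x) \<bullet> \<alpha> = inner (\<phi>m (x i)) (embed_beta \<phi>m x \<alpha>)" for i \<alpha>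
    by (rule col_lin[OF Km_feat Kv_feat])
  have oa: "\<alpha> \<bullet> (kmat Km x *v \<alpha>) = inner (embed_beta \<phi>m x \<alpha>) (embed_beta \<phi>m x \<alpha>)" for \<alpha>
    by (rule obj_alpha[OF Km_feat Kv_feat])
  have te: "trace (kmat Kv x ** B) = trK (\<lambda>i. \<phi>v (x i)) B" for B
    by (rule trace_eq[OF Km_feat Kv_feat])
  have onp: "psd_mat B \<Longrightarrow> 0 \<le> trK (\<lambda>i. \<phi>v (x i)) B" for B
    by (rule obj_nonneg_parts[OF Km_feat Kv_feat])

  define Pn where "Pn p = Pn_feasible Km Kv x y (fst p) (snd p)" for p :: "(real^'n) \<times> (real^'n^'n)"
  define f where "f p = Pn_obj \<gamma> Km Kv x (fst p) (snd p)" for p :: "(real^'n) \<times> (real^'n^'n)"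

  have pinf_ge_nn: "nuclear_norm A \<le> Pinf_obj \<gamma> \<beta> A" for \<beta> :: 'hm and A :: "'hv \<Rightarrow> 'hv"
    unfolding Pinf_obj_def by (rule ereal_le_add_self2) (simp add: gamma_nonneg)

  have red: "Pn_feasible Km Kv x y (ared H d \<beta>) (Bred G c A)
      \<and> ereal (Pn_obj \<gamma> Km Kv x (ared H d \<beta>) (Bred G c A)) \<le> Pinf_obj \<gamma> \<beta> A"
    if P: "Pinf_feasible \<phi>m \<phi>v x y \<beta> A" for \<beta> A
  proof -
    have A: "psd_op A" and cons: "\<And>i. (y i - inner (?vm i) \<beta>)\<^sup>2 \<le> inner (?vv i) (A (?vv i))"
      using P by (auto simp: Pinf_feasible_def)
    have "Pn_feasible Km Kv x y (ared H d \<beta>) (Bred G c A)"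
      unfolding Pn_feasible_def
      using psd_Bred[OF G crep A] cons quad_Bred[OF G crep A]
        lin_ared[OF H drep] cq cl
      by (simp add: embed_beta_EB)
    moreover have "ereal (Pn_obj \<gamma> Km Kv x (ared H d \<beta>) (Bred G c A)) \<le> Pinf_obj \<gamma> \<beta> A"
    proof -
      have o: "Pn_obj \<gamma> Km Kv x (ared H d \<beta>) (Bred G c A)
          = \<gamma> * inner (EB ?vm (ared H d \<beta>)) (EB ?vm (ared H d \<beta>)) + (\<Sum>g\<in>G. inner g (A g))"
      proof -
        have tb: "trK ?vv (Bred G c A) = (\<Sum>g\<in>G. inner g (A g))" by (rule trK_Bred[OF G crep A])
        show ?thesis unfolding Pn_obj_def oa te tb embed_beta_EB ..
      qed
      have a: "\<gamma> * inner (EB ?vm (ared H d \<beta>)) (EB ?vm (ared H d \<beta>)) \<le> \<gamma> * (norm \<beta>)\<^sup>2"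
        using norm_ared[OF H drep, of \<beta>] gamma_nonneg
        by (simp add: power2_norm_eq_inner mult_left_mono)
      have b: "ereal (\<Sum>g\<in>G. inner g (A g)) \<le> nuclear_norm A" by (rule nn_lower_set[OF G(1)])
      have "ereal (Pn_obj \<gamma> Km Kv x (ared H d \<beta>) (Bred G c A))
          = ereal (\<gamma> * inner (EB ?vm (ared H d \<beta>)) (EB ?vm (ared H d \<beta>))) + ereal (\<Sum>g\<in>G. inner g (A g))"
        by (simp add: o)
      also have "\<dots> \<le> ereal (\<gamma> * (norm \<beta>)\<^sup>2) + nuclear_norm A"
        using a b by (intro add_mono) auto
      finally show ?thesis by (simp add: Pinf_obj_def)
    qed
    ultimately show ?thesis by blast
  qed

  define Ra where "Ra N i = (\<Sum>h\<in>H. \<bar>d h i\<bar> * (\<Sum>k\<in>UNIV. \<bar>d h k\<bar> * (\<bar>y k\<bar> + 1 + (norm (?vv k))\<^sup>2 * N)))" for N i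
  define Rb where "Rb N i j = (\<Sum>g\<in>G. \<Sum>g'\<in>G. \<bar>c g i\<bar> * N * \<bar>c g' j\<bar>)" for N i j

  have bounds: "(\<forall>i. \<bar>ared H d \<beta> $ i\<bar> \<le> Ra N i) \<and> (\<forall>i j. \<bar>Bred G c A $ i $ j\<bar> \<le> Rb N i j)"
    if P: "Pinf_feasible \<phi>m \<phi>v x y \<beta> A" and N: "nuclear_norm A \<le> ereal N" for \<beta> A N
  proof -
    have A: "psd_op A" and cons: "\<And>i. (y i - inner (?vm i) \<beta>)\<^sup>2 \<le> inner (?vv i) (A (?vv i))"
      using P by (auto simp: Pinf_feasible_def)
    have lin: "linear A" using A by (simp add: psd_op_def bounded_linear.linear)
    have t: "\<bar>inner (?vm k) \<beta>\<bar> \<le> \<bar>y k\<bar> + 1 + (norm (?vv k))\<^sup>2 * N" for k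
    proof -
      have "\<bar>inner (?vm k) \<beta>\<bar> \<le> \<bar>y k\<bar> + \<bar>y k - inner (?vm k) \<beta>\<bar>" by linarith
      also have "\<dots> \<le> \<bar>y k\<bar> + (1 + (y k - inner (?vm k) \<beta>)\<^sup>2)" using abs_le_sq by simp
      also have "\<dots> \<le> \<bar>y k\<bar> + (1 + (norm (?vv k))\<^sup>2 * N)"
        using cons[of k] quad_le_nn[OF lin N, of "?vv k"] by simp
      finally show ?thesis by simp
    qed
    have "\<bar>ared H d \<beta> $ i\<bar> \<le> Ra N i" for i
    proof -
      have "\<bar>ared H d \<beta> $ i\<bar> \<le> (\<Sum>h\<in>H. \<bar>d h i\<bar> * (\<Sum>k\<in>UNIV. \<bar>d h k\<bar> * \<bar>inner (?vm k) \<beta>\<bar>))"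
        by (rule ared_bound[OF H drep])
      also have "\<dots> \<le> Ra N i"
        unfolding Ra_def by (intro sum_mono mult_left_mono t) auto
      finally show ?thesis .
    qed
    moreover have "\<bar>Bred G c A $ i $ j\<bar> \<le> Rb N i j" for i j
      unfolding Rb_def by (rule Bred_bound[OF G crep A N])
    ultimately show ?thesis by blast
  qed

  have le1: "Pn_val \<gamma> Km Kv x y \<le> Pinf_val \<gamma> \<phi>m \<phi>v x y"
    unfolding Pinf_val_def
  proof (rule INF_greatest, clarify)
    fix \<beta> A assume P: "Pinf_feasible \<phi>m \<phi>v x y \<beta> A"
    have "Pn_val \<gamma> Km Kv x y \<le> ereal (Pn_obj \<gamma> Km Kv x (ared H d \<beta>) (Bred G c A))"
      unfolding Pn_val_def by (rule INF_lower2[of "(ared H d \<beta>, Bred G c A)"]) (use red[OF P] in auto)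
    also have "\<dots> \<le> Pinf_obj \<gamma> \<beta> A" using red[OF P] by blast
    finally show "Pn_val \<gamma> Km Kv x y \<le> Pinf_obj \<gamma> (fst (\<beta>, A)) (snd (\<beta>, A))" by simp
  qed
  have le2: "Pinf_val \<gamma> \<phi>m \<phi>v x y \<le> Pn_val \<gamma> Km Kv x y"
    unfolding Pn_val_def
  proof (rule INF_greatest, clarify)
    fix \<alpha> B assume F: "Pn_feasible Km Kv x y \<alpha> B"
    have "Pinf_val \<gamma> \<phi>m \<phi>v x y \<le> Pinf_obj \<gamma> (embed_beta \<phi>m x \<alpha>) (embed_A \<phi>v x B)"
      unfolding Pinf_val_def
      by (rule INF_lower2[of "(embed_beta \<phi>m x \<alpha>, embed_A \<phi>v x B)"]) (use emb[OF F] in auto)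
    then show "Pinf_val \<gamma> \<phi>m \<phi>v x y \<le> ereal (Pn_obj \<gamma> Km Kv x (fst (\<alpha>, B)) (snd (\<alpha>, B)))"
      using emb[OF F] by simp
  qed
  have eq: "Pn_val \<gamma> Km Kv x y = Pinf_val \<gamma> \<phi>m \<phi>v x y" using le1 le2 by (rule antisym)

  have c2: "\<forall>\<alpha> B. Pn_feasible Km Kv x y \<alpha> B \<longrightarrow>
          Pinf_feasible \<phi>m \<phi>v x y (embed_beta \<phi>m x \<alpha>) (embed_A \<phi>v x B)
          \<and> Pinf_obj \<gamma> (embed_beta \<phi>m x \<alpha>) (embed_A \<phi>v x B) = ereal (Pn_obj \<gamma> Km Kv x \<alpha> B)"
    using emb by blast
  have c3: "\<forall>\<alpha> B. Pn_feasible Km Kv x y \<alpha> B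
             \<and> ereal (Pn_obj \<gamma> Km Kv x \<alpha> B) = Pn_val \<gamma> Km Kv x y \<longrightarrow>
          Pinf_feasible \<phi>m \<phi>v x y (embed_beta \<phi>m x \<alpha>) (embed_A \<phi>v x B)
          \<and> Pinf_obj \<gamma> (embed_beta \<phi>m x \<alpha>) (embed_A \<phi>v x B) = Pinf_val \<gamma> \<phi>m \<phi>v x y"
    using emb eq by metis

  have c4: "(\<exists>\<alpha> B. transpose B = B
             \<and> Pinf_feasible \<phi>m \<phi>v x y (embed_beta \<phi>m x \<alpha>) (embed_A \<phi>v x B)
             \<and> Pinf_obj \<gamma> (embed_beta \<phi>m x \<alpha>) (embed_A \<phi>v x B) = Pinf_val \<gamma> \<phi>m \<phi>v x y)"
    if ex: "\<exists>\<beta> A. Pinf_feasible \<phi>m \<phi>v x y \<beta> A"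
  proof -
    from ex obtain \<beta>0 A0 where P0: "Pinf_feasible \<phi>m \<phi>v x y \<beta>0 A0" by blast
    have set_eq: "{(\<alpha>, B). Pn_feasible Km Kv x y \<alpha> B} = {p. Pn p}" by (auto simp: Pn_def)
    have valdef: "Pn_val \<gamma> Km Kv x y = (INF p\<in>{p. Pn p}. ereal (f p))"
      unfolding Pn_val_def set_eq f_def ..
    have fnn: "0 \<le> f p" if "Pn p" for p
    proof -
      have B: "psd_mat (snd p)" using that by (simp add: Pn_def Pn_feasible_def)
      show ?thesis
        unfolding f_def Pn_obj_def oa te
        using onp[OF B] gamma_nonneg by simp
    qed
    have Pr: "Pn (ared H d \<beta>0, Bred G c A0)" using red[OF P0] by (simp add: Pn_def)
    have ub: "Pn_val \<gamma> Km Kv x y \<le> ereal (f (ared H d \<beta>0, Bred G c A0))"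
      unfolding valdef by (rule INF_lower) (use Pr in simp)
    have lb: "0 \<le> Pn_val \<gamma> Km Kv x y"
      unfolding valdef by (rule INF_greatest) (use fnn in simp)
    obtain v where v: "Pn_val \<gamma> Km Kv x y = ereal v"
      using ub lb by (cases "Pn_val \<gamma> Km Kv x y") auto
    define N where "N = v + 1"
    define S where "S = {p. Pn p \<and> (\<forall>i. \<bar>fst p $ i\<bar> \<le> Ra N i) \<and> (\<forall>i j. \<bar>snd p $ i $ j\<bar> \<le> Rb N i j)}"
    have closedS: "closed S"
    proof -
      have "S = {p. (\<forall>i j. snd p$i$j = snd p$j$i) \<and> (\<forall>w. 0 \<le> (\<Sum>i\<in>UNIV. \<Sum>j\<in>UNIV. snd p$i$j * w$i * w$j))
     \<and> (\<forall>i. (y i - (\<Sum>k\<in>UNIV. Km (x k) (x i) * fst p$k))\<^sup>2 \<le> (\<Sum>k\<in>UNIV. \<Sum>l\<in>UNIV. snd p$k$l * Kv (x k) (x i) * Kv (x l) (x i)))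
     \<and> (\<forall>i. \<bar>fst p $ i\<bar> \<le> Ra N i) \<and> (\<forall>i j. \<bar>snd p $ i $ j\<bar> \<le> Rb N i j)}"
        unfolding S_def Pn_def feas_coord by blast
      also have "closed \<dots>"
        by (intro closed_Collect_conj closed_Collect_all closed_Collect_le closed_Collect_eq continuous_intros)
      finally show ?thesis .
    qed
    have boundedS: "bounded S"
      unfolding bounded_iff
    proof (intro exI ballI)
      fix p assume p: "p \<in> S"
      have "norm p \<le> norm (fst p) + norm (snd p)" using norm_Pair_le[of "fst p" "snd p"] by simp
      also have "\<dots> \<le> (\<Sum>i\<in>UNIV. \<bar>fst p $ i\<bar>) + (\<Sum>i\<in>UNIV. \<Sum>j\<in>UNIV. \<bar>snd p $ i $ j\<bar>)"
        by (intro add_mono norm_le_l1_cart norm_mat_le)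
      also have "\<dots> \<le> (\<Sum>i\<in>UNIV. Ra N i) + (\<Sum>i\<in>UNIV. \<Sum>j\<in>UNIV. Rb N i j)"
        using p unfolding S_def by (intro add_mono sum_mono) auto
      finally show "norm p \<le> (\<Sum>i\<in>UNIV. Ra N i) + (\<Sum>i\<in>UNIV. \<Sum>j\<in>UNIV. Rb N i j)" .
    qed
    have compactS: "compact S" using closedS boundedS by (simp add: compact_eq_bounded_closed)
    have contf: "continuous_on S f"
    proof -
      have "f = (\<lambda>p. \<gamma> * (\<Sum>i\<in>UNIV. \<Sum>j\<in>UNIV. Km (x i) (x j) * fst p$i * fst p$j)
          + (\<Sum>i\<in>UNIV. \<Sum>k\<in>UNIV. Kv (x i) (x k) * snd p$k$i))"
        unfolding f_def obj_coord ..
      moreover have "continuous_on S (\<lambda>p. \<gamma> * (\<Sum>i\<in>UNIV. \<Sum>j\<in>UNIV. Km (x i) (x j) * fst p$i * fst p$j)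
          + (\<Sum>i\<in>UNIV. \<Sum>k\<in>UNIV. Kv (x i) (x k) * snd p$k$i))"
        by (intro continuous_intros)
      ultimately show ?thesis by simp
    qed
    have redS: "\<exists>q\<in>S. f q \<le> f p" if Pp: "Pn p" and fp: "f p < v + 1" for p
    proof -
      have F: "Pn_feasible Km Kv x y (fst p) (snd p)" using Pp by (simp add: Pn_def)
      let ?\<beta> = "embed_beta \<phi>m x (fst p)" and ?A = "embed_A \<phi>v x (snd p)"
      have P: "Pinf_feasible \<phi>m \<phi>v x y ?\<beta> ?A" and ob: "Pinf_obj \<gamma> ?\<beta> ?A = ereal (f p)"
        using emb[OF F] by (auto simp: f_def)
      have nn: "nuclear_norm ?A \<le> ereal N"
        using pinf_ge_nn[of ?A ?\<beta>] ob fp N_def by (metis ereal_less_eq(3) less_imp_le order_trans)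
      define q where "q = (ared H d ?\<beta>, Bred G c ?A)"
      have "q \<in> S" using red[OF P] bounds[OF P nn] unfolding S_def q_def Pn_def by auto
      moreover have "f q \<le> f p" using red[OF P] ob unfolding q_def f_def by simp
      ultimately show ?thesis by blast
    qed
    have "S \<subseteq> {p. Pn p}" by (auto simp: S_def)
    from attain_generic[OF compactS this valdef[symmetric, unfolded v] contf redS]
    obtain p where p: "Pn p" "ereal (f p) = ereal v" by blast
    have F: "Pn_feasible Km Kv x y (fst p) (snd p)" using p by (simp add: Pn_def)
    have tr: "transpose (snd p) = snd p" using F by (simp add: Pn_feasible_def psd_mat_def)
    show ?thesis
      using emb[OF F] tr p(2) v eq unfolding f_def by metis
  qed
  show ?thesis using eq c2 c3 c4 by blast
qed

end
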